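(* Let $\Omega$ be a finite search space. Let $S=\{\phi_i\}_{i}$ be a countable set of decomposable probability-of-success metrics and let $\mathcal{D}$ be a probability distribution over $S$. Then the metric $$\phi'(t,f)=\mathbb{E}_{\phi\sim\mathcal{D}}[\phi(t,f)]=\sum_i \mathcal{D}(\phi_i)\,\phi_i(t,f)$$ is also a decomposable probability-of-success metric.
   Context: A probability-of-success metric $\phi$ assigns to each target set $t\subseteq\Omega$ and information resource $f$ a success probability. It is called decomposable if for each $f$ there exists a probability vector $\mathbf{P}_{\phi,f}\in\mathbb{R}^{|\Omega|}$ (nonnegative entries summing to $1$), not a function of $t$, such that $\phi(t,f)=\mathbf{t}^\top\mathbf{P}_{\phi,f}$ for all $t\subseteq\Omega$, where $\mathbf{t}\in\{0,1\}^{|\Omega|}$ is the indicator vector of $t$. *)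

theory Defs
  imports "HOL-Probability.Probability"
begin

text \<open>The search space \<Omega> is the finite type 'w; a target set is t :: 'w set, whose
indicator vector dotted with P is the sum of P over t. A metric maps a target set
and an information resource (of type 'f) to a success probability.\<close>

definition decomposable :: "('w::finite set \<Rightarrow> 'f \<Rightarrow> real) \<Rightarrow> bool" where
  "decomposable \<phi> \<longleftrightarrow>
     (\<forall>f. \<exists>P :: 'w \<Rightarrow> real. (\<forall>w. 0 \<le> P w) \<and> (\<Sum>w\<in>UNIV. P w) = 1 \<and>
          (\<forall>t. \<phi> t f = (\<Sum>w\<in>t. P w)))"

end

theory Submission
  imports Defs
begin

theorem lemma3:
  fixes S :: "('w::finite set \<Rightarrow> 'f \<Rightarrow> real) set"
    and D :: "('w set \<Rightarrow> 'f \<Rightarrow> real) pmf"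
  assumes "countable S"
    and "\<forall>\<phi>\<in>S. decomposable \<phi>"
    and "set_pmf D \<subseteq> S"
  shows "decomposable (\<lambda>t f. measure_pmf.expectation D (\<lambda>\<phi>. \<phi> t f))"
  unfolding decomposable_def
proof
  fix f
  define Q where "Q \<phi> = (SOME P :: 'w \<Rightarrow> real. (\<forall>w. 0 \<le> P w) \<and> (\<Sum>w\<in>UNIV. P w) = 1 \<and>
          (\<forall>t. \<phi> t f = (\<Sum>w\<in>t. P w)))" for \<phi> :: "'w set \<Rightarrow> 'f \<Rightarrow> real"
  have Q: "(\<forall>w. 0 \<le> Q \<phi> w) \<and> (\<Sum>w\<in>UNIV. Q \<phi> w) = 1 \<and> (\<forall>t. \<phi> t f = (\<Sum>w\<in>t. Q \<phi> w))"
    if "\<phi> \<in> set_pmf D" for \<phi>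
  proof -
    have "decomposable \<phi>" using assms that by blast
    then have "\<exists>P :: 'w \<Rightarrow> real. (\<forall>w. 0 \<le> P w) \<and> (\<Sum>w\<in>UNIV. P w) = 1 \<and>
          (\<forall>t. \<phi> t f = (\<Sum>w\<in>t. P w))" unfolding decomposable_def by blast
    then show ?thesis unfolding Q_def by (rule someI_ex)
  qed
  have bnd: "0 \<le> Q \<phi> w \<and> Q \<phi> w \<le> 1" if "\<phi> \<in> set_pmf D" for \<phi> w
  proof -
    have "Q \<phi> w \<le> (\<Sum>w\<in>UNIV. Q \<phi> w)"
      by (rule member_le_sum) (use Q[OF that] in auto)
    then show ?thesis using Q[OF that] by auto
  qed
  have int: "integrable (measure_pmf D) (\<lambda>\<phi>. Q \<phi> w)" for w
    by (rule measure_pmf.integrable_const_bound[where B=1])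
       (auto simp: AE_measure_pmf_iff dest: bnd[of _ w])
  define P where "P w = measure_pmf.expectation D (\<lambda>\<phi>. Q \<phi> w)" for w
  show "\<exists>P :: 'w \<Rightarrow> real. (\<forall>w. 0 \<le> P w) \<and> (\<Sum>w\<in>UNIV. P w) = 1 \<and>
          (\<forall>t. measure_pmf.expectation D (\<lambda>\<phi>. \<phi> t f) = (\<Sum>w\<in>t. P w))"
  proof (intro exI[of _ P] conjI allI)
    fix w show "0 \<le> P w" unfolding P_def
      by (rule integral_nonneg_AE) (auto simp: AE_measure_pmf_iff dest: bnd)
  next
    fix t :: "'w set"
    have "measure_pmf.expectation D (\<lambda>\<phi>. \<phi> t f) = measure_pmf.expectation D (\<lambda>\<phi>. \<Sum>w\<in>t. Q \<phi> w)"
      by (rule integral_cong_AE) (auto simp: AE_measure_pmf_iff dest: Q)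
    also have "\<dots> = (\<Sum>w\<in>t. P w)" unfolding P_def
      using Bochner_Integration.integral_sum[where I=t and f="\<lambda>w \<phi>. Q \<phi> w"] int by simp
    finally show "measure_pmf.expectation D (\<lambda>\<phi>. \<phi> t f) = (\<Sum>w\<in>t. P w)" .
  next
    have "(\<Sum>w\<in>UNIV. P w) = measure_pmf.expectation D (\<lambda>\<phi>. \<Sum>w\<in>UNIV. Q \<phi> w)"
      unfolding P_def using Bochner_Integration.integral_sum[where I=UNIV and f="\<lambda>w \<phi>. Q \<phi> w"] int by simp
    also have "\<dots> = measure_pmf.expectation D (\<lambda>\<phi>. 1)"
      by (rule integral_cong_AE) (auto simp: AE_measure_pmf_iff dest: Q)
    also have "\<dots> = 1" by simp
    finally show "(\<Sum>w\<in>UNIV. P w) = 1" .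
  qed
qed

end
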